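(* Let $k\ge1$ and $a_1,\dots,a_k\in\Sigma$ with $a_i\neq a_{i+1}$ for $1\le i<k$, and let $L[a_1,\dots,a_k]=\Sigma^*a_1\Sigma^*a_2\Sigma^*\cdots\Sigma^*a_k\Sigma^*$. Then the MON-1qfa $A[a_1,\dots,a_k]$ recognizes $L[a_1,\dots,a_k]$ with cut-point $\lambda=\frac{1}{2^{2k+1}}$ isolated by $\delta=\frac{1}{2^{2(k+1)}}$.
   Context: A MON-1qfa over a finite alphabet $\Sigma$ is a tuple $A=\langle\Sigma\cup\{\#\},(O_c)_{c\in\Sigma\cup\{\#\}},\pi_0,F\rangle$, where $\pi_0\in\mathbb{C}^{1\times m}$ has norm $1$, each $O_c$ is an observable with spectral decomposition into orthogonal projectors $P_c(r)$, $r\in V(O_c)$, and $F\subseteq V(O_\#)$. For $x=x_1\cdots x_n$, with $\rho_0=\pi_0^\dagger\pi_0$ and $\rho_i=\sum_{r}P_{x_i}(r)\rho_{i-1}P_{x_i}(r)$, the acceptance probability is $p_A(x)=\sum_{r\in F}\mathrm{tr}(P_\#(r)\rho_n)$. $A$ recognizes $L$ with cut-point $\lambda$ isolated by $\delta>0$ if for all $x\in\Sigma^*$: $x\in L\Leftrightarrow p_A(x)>\lambda$, and $|p_A(x)-\lambda|\ge\delta$. Construction: let $S=\{a_1,\dots,a_k\}$; for $\alpha\in S$ let $j^{(\alpha)}_1<\dots<j^{(\alpha)}_{\#\alpha}$ be all indices $j$ with $a_j=\alpha$. Define the $(k+1)\times(k+1)$ matrices: $(P_\nearrow^{(k)}(\alpha))_{rs}=1$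 if $r=s$ and $r\notin\{j^{(\alpha)}_i,j^{(\alpha)}_i+1\}$ for all $i$; $=\frac12$ if $r,s\in\{j^{(\alpha)}_i,j^{(\alpha)}_i+1\}$ for some $i$; $=0$ otherwise. $(P_\searrow^{(k)}(\alpha))_{rs}=\frac12$ if $r=s\in\{j^{(\alpha)}_i,j^{(\alpha)}_i+1\}$ for some $i$; $=-\frac12$ if $r\neq s$ and $r,s\in\{j^{(\alpha)}_i,j^{(\alpha)}_i+1\}$ for some $i$; $=0$ otherwise. (These are complementary orthogonal projectors.) Let $e_j$ be the $j$-th standard basis row vector of length $k+1$. $A[a_1,\dots,a_k]$ is the MON-1qfa of dimension $k+1$ with initial state $\pi_0=e_1$; for $\alpha\in S$, $O_\alpha$ is the two-outcome observable with projectors $P_\nearrow^{(k)}(\alpha)$ and $P_\searrow^{(k)}(\alpha)$; for $\sigma\in\Sigma\setminus S$, $O_\sigma$ has the single projector $I_{(k+1)\times(k+1)}$; $O_\#$ is a two-outcome observable whose accepting outcome (the set $F$) has projector $e_{k+1}^Te_{k+1}$ and whose other outcome has projector $I-e_{k+1}^Te_{k+1}$. *)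

theory Defs
  imports "Jordan_Normal_Form.Matrix"
begin

text \<open>Symbols of the extended alphabet are
  'a option: Some c is the letter c, None is the end marker #.
  For each symbol c the observable O_c is given by its (finite) set of outcomes
  (eigenvalues) qvals c of type 'r and the projectors qproj c r of its spectral
  decomposition. qacc is the accepting set F (a subset of the outcomes of O_#).\<close>

record ('a, 'r) mon1qfa =
  qdim  :: nat
  qinit :: "complex vec"
  qvals :: "'a option \<Rightarrow> 'r set"
  qproj :: "'a option \<Rightarrow> 'r \<Rightarrow> complex mat"
  qacc  :: "'r set"

definition mtrace :: "complex mat \<Rightarrow> complex" where
  "mtrace M = (\<Sum>i<dim_row M. M $$ (i, i))"

definition is_orth_projector :: "nat \<Rightarrow> complex mat \<Rightarrow> bool" where
  "is_orth_projector m P \<longleftrightarrow> P \<in> carrier_mat m m \<and> P * P = P \<and>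
     (\<forall>i<m. \<forall>j<m. P $$ (i, j) = cnj (P $$ (j, i)))"

definition is_observable :: "nat \<Rightarrow> 'r set \<Rightarrow> ('r \<Rightarrow> complex mat) \<Rightarrow> bool" where
  "is_observable m V P \<longleftrightarrow> finite V \<and> V \<noteq> {} \<and>
     (\<forall>r\<in>V. is_orth_projector m (P r) \<and> P r \<noteq> 0\<^sub>m m m) \<and>
     (\<forall>r\<in>V. \<forall>s\<in>V. r \<noteq> s \<longrightarrow> P r * P s = 0\<^sub>m m m) \<and>
     (\<forall>i<m. \<forall>j<m. (\<Sum>r\<in>V. P r $$ (i, j)) = (1\<^sub>m m :: complex mat) $$ (i, j))"

definition is_mon1qfa :: "'a set \<Rightarrow> ('a, 'r) mon1qfa \<Rightarrow> bool" where
  "is_mon1qfa Sig A \<longleftrightarrow>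
     qinit A \<in> carrier_vec (qdim A) \<and>
     (\<Sum>i<qdim A. (cmod (qinit A $ i))\<^sup>2) = 1 \<and>
     (\<forall>c \<in> insert None (Some ` Sig). is_observable (qdim A) (qvals A c) (qproj A c)) \<and>
     qacc A \<subseteq> qvals A None"

definition rho0 :: "('a, 'r) mon1qfa \<Rightarrow> complex mat" where
  "rho0 A = mat (qdim A) (qdim A) (\<lambda>(i, j). cnj (qinit A $ i) * qinit A $ j)"

definition measure_step :: "('a, 'r) mon1qfa \<Rightarrow> 'a option \<Rightarrow> complex mat \<Rightarrow> complex mat" where
  "measure_step A c \<rho> = mat (qdim A) (qdim A)
     (\<lambda>(i, j). \<Sum>r\<in>qvals A c. (qproj A c r * \<rho> * qproj A c r) $$ (i, j))"

definition rho_after :: "('a, 'r) mon1qfa \<Rightarrow> 'a list \<Rightarrow> complex mat" where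
  "rho_after A x = foldl (\<lambda>\<rho> c. measure_step A (Some c) \<rho>) (rho0 A) x"

definition p_acc :: "('a, 'r) mon1qfa \<Rightarrow> 'a list \<Rightarrow> real" where
  "p_acc A x = Re (\<Sum>r\<in>qacc A. mtrace (qproj A None r * rho_after A x))"

definition recognizes_isolated ::
  "'a set \<Rightarrow> ('a, 'r) mon1qfa \<Rightarrow> 'a list set \<Rightarrow> real \<Rightarrow> real \<Rightarrow> bool" where
  "recognizes_isolated Sig A L lam \<delta> \<longleftrightarrow> \<delta> > 0 \<and>
     (\<forall>x\<in>lists Sig. (x \<in> L \<longleftrightarrow> p_acc A x > lam) \<and> \<bar>p_acc A x - lam\<bar> \<ge> \<delta>)"

fun Lsub :: "'a set \<Rightarrow> 'a list \<Rightarrow> 'a list set" where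
  "Lsub Sig [] = lists Sig"
| "Lsub Sig (a # as) = {u @ [a] @ v | u v. u \<in> lists Sig \<and> v \<in> Lsub Sig as}"

text \<open>Construction; indices are 0-based: paper index j (1..k+1) is j-1 here,
  the letter a_j is as ! (j-1), and the pair {j, j+1} for a_j = alpha becomes
  {i, i+1} with as ! i = alpha.\<close>
definition in_pair :: "'a list \<Rightarrow> 'a \<Rightarrow> nat \<Rightarrow> nat \<Rightarrow> bool" where
  "in_pair as \<alpha> r s \<longleftrightarrow> (\<exists>i<length as. as ! i = \<alpha> \<and> r \<in> {i, Suc i} \<and> s \<in> {i, Suc i})"

definition P_up :: "'a list \<Rightarrow> 'a \<Rightarrow> complex mat" where
  "P_up as \<alpha> = mat (Suc (length as)) (Suc (length as)) (\<lambda>(r, s).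
     if r = s \<and> (\<forall>i<length as. as ! i = \<alpha> \<longrightarrow> r \<notin> {i, Suc i}) then 1
     else if in_pair as \<alpha> r s then 1/2 else 0)"

definition P_down :: "'a list \<Rightarrow> 'a \<Rightarrow> complex mat" where
  "P_down as \<alpha> = mat (Suc (length as)) (Suc (length as)) (\<lambda>(r, s).
     if r = s \<and> in_pair as \<alpha> r r then 1/2
     else if r \<noteq> s \<and> in_pair as \<alpha> r s then -1/2 else 0)"

definition P_last :: "nat \<Rightarrow> complex mat" where
  "P_last k = mat (Suc k) (Suc k) (\<lambda>(r, s). if r = k \<and> s = k then 1 else 0)"

text \<open>A[a_1,...,a_k]; outcomes are bool: for alpha in S, True = up, False = down;
  for other letters the single outcome True with projector I;
  for #, True is the accepting outcome (F = {True}).\<close>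
definition A_constr :: "'a list \<Rightarrow> ('a, bool) mon1qfa" where
  "A_constr as = \<lparr>
     qdim = Suc (length as),
     qinit = unit_vec (Suc (length as)) 0,
     qvals = (\<lambda>c. case c of
                None \<Rightarrow> {True, False}
              | Some \<sigma> \<Rightarrow> (if \<sigma> \<in> set as then {True, False} else {True})),
     qproj = (\<lambda>c b. case c of
                None \<Rightarrow> (if b then P_last (length as)
                         else 1\<^sub>m (Suc (length as)) - P_last (length as))
              | Some \<sigma> \<Rightarrow> (if \<sigma> \<in> set as then (if b then P_up as \<sigma> else P_down as \<sigma>)
                           else 1\<^sub>m (Suc (length as)))),
     qacc = {True} \<rparr>"

end

theory Submission
  imports Defs
begin

lemma mult_entry:
  assumes "A \<in> carrier_mat n n" "B \<in> carrier_mat n n" "i < n" "j < n"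
  shows "(A * B) $$ (i,j) = (\<Sum>t<n. A $$ (i,t) * B $$ (t,j))"
  using assms by (simp add: scalar_prod_def lessThan_atLeast0)

lemma sum2:
  fixes g :: "nat \<Rightarrow> 'b::comm_monoid_add"
  assumes "Suc b < n" "\<And>t. t < n \<Longrightarrow> t \<noteq> b \<Longrightarrow> t \<noteq> Suc b \<Longrightarrow> g t = 0"
  shows "(\<Sum>t<n. g t) = g b + g (Suc b)"
proof -
  have "(\<Sum>t<n. g t) = (\<Sum>t\<in>{b, Suc b}. g t)"
    using assms by (intro sum.mono_neutral_right) auto
  then show ?thesis by simp
qed

lemma sum1:
  fixes g :: "nat \<Rightarrow> 'b::comm_monoid_add"
  assumes "b < n" "\<And>t. t < n \<Longrightarrow> t \<noteq> b \<Longrightarrow> g t = 0"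
  shows "(\<Sum>t<n. g t) = g b"
proof -
  have "(\<Sum>t<n. g t) = (\<Sum>t\<in>{b}. g t)"
    using assms by (intro sum.mono_neutral_right) auto
  then show ?thesis by simp
qed

definition herm :: "nat \<Rightarrow> complex mat \<Rightarrow> bool" where
  "herm n P \<longleftrightarrow> (\<forall>i<n. \<forall>j<n. P $$ (i, j) = cnj (P $$ (j, i)))"

lemma proj_compl:
  fixes D :: "complex mat"
  assumes D: "D \<in> carrier_mat n n" and DD: "D * D = D" and h: "herm n D"
  shows "is_orth_projector n (1\<^sub>m n - D)" "D * (1\<^sub>m n - D) = 0\<^sub>m n n"
        "(1\<^sub>m n - D) * D = 0\<^sub>m n n"
proof -
  have o: "1\<^sub>m n \<in> carrier_mat n n" by (rule one_carrier_mat)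
  have c: "1\<^sub>m n - D \<in> carrier_mat n n" using D by (rule minus_carrier_mat)
  have e1: "D * (1\<^sub>m n - D) = D * 1\<^sub>m n - D * D"
    by (rule mult_minus_distrib_mat[OF D o D])
  have e2: "(1\<^sub>m n - D) * D = 1\<^sub>m n * D - D * D"
    by (rule minus_mult_distrib_mat[OF o D D])
  have dd: "D - D = 0\<^sub>m n n" using D by (rule minus_r_inv_mat)
  have r1: "D * 1\<^sub>m n = D" using D by (rule right_mult_one_mat)
  have l1: "1\<^sub>m n * D = D" using D by (rule left_mult_one_mat)
  show z1: "D * (1\<^sub>m n - D) = 0\<^sub>m n n" unfolding e1 DD r1 dd ..
  show z2: "(1\<^sub>m n - D) * D = 0\<^sub>m n n" unfolding e2 DD l1 dd ..
  have e3: "(1\<^sub>m n - D) * (1\<^sub>m n - D) = 1\<^sub>m n * (1\<^sub>m n - D) - D * (1\<^sub>m n - D)"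
    by (rule minus_mult_distrib_mat[OF o D c])
  have l2: "1\<^sub>m n * (1\<^sub>m n - D) = 1\<^sub>m n - D" using c by (rule left_mult_one_mat)
  have m0: "1\<^sub>m n - D - 0\<^sub>m n n = 1\<^sub>m n - D"
  proof (rule eq_matI)
    have cd: "dim_row (1\<^sub>m n - D) = n" "dim_col (1\<^sub>m n - D) = n" using c by auto
    fix i j assume "i < dim_row (1\<^sub>m n - D)" "j < dim_col (1\<^sub>m n - D)"
    then have ij: "i < n" "j < n" using cd by auto
    then show "(1\<^sub>m n - D - 0\<^sub>m n n) $$ (i, j) = (1\<^sub>m n - D) $$ (i, j)" by simp
  next
    show "dim_row (1\<^sub>m n - D - 0\<^sub>m n n) = dim_row (1\<^sub>m n - D)" using D by simp
    show "dim_col (1\<^sub>m n - D - 0\<^sub>m n n) = dim_col (1\<^sub>m n - D)" using D by simp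
  qed
  have "(1\<^sub>m n - D) * (1\<^sub>m n - D) = 1\<^sub>m n - D" unfolding e3 z1 l2 m0 ..
  moreover have "\<forall>i<n. \<forall>j<n. (1\<^sub>m n - D) $$ (i, j) = cnj ((1\<^sub>m n - D) $$ (j, i))"
  proof (intro allI impI)
    fix i j assume ij: "i < n" "j < n"
    have dr: "dim_row D = n" "dim_col D = n" using D by auto
    have hh: "D $$ (i, j) = cnj (D $$ (j, i))" using h ij unfolding herm_def by blast
    show "(1\<^sub>m n - D) $$ (i, j) = cnj ((1\<^sub>m n - D) $$ (j, i))"
      using ij dr hh by simp
  qed
  ultimately show "is_orth_projector n (1\<^sub>m n - D)"
    using c unfolding is_orth_projector_def by blast
qed


definition inblk :: "'a list \<Rightarrow> 'a \<Rightarrow> nat \<Rightarrow> nat \<Rightarrow> bool" where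
  "inblk as \<alpha> b r \<longleftrightarrow> b < length as \<and> as ! b = \<alpha> \<and> (r = b \<or> r = Suc b)"

definition adj :: "'a list \<Rightarrow> bool" where
  "adj as \<longleftrightarrow> (\<forall>i. Suc i < length as \<longrightarrow> as ! i \<noteq> as ! Suc i)"

lemma inblk_unique:
  assumes "adj as" "inblk as \<alpha> b r" "inblk as \<alpha> c r" shows "b = c"
proof (rule ccontr)
  assume "b \<noteq> c"
  then have cb: "c = Suc b \<or> b = Suc c" using assms(2,3) unfolding inblk_def by auto
  have a: "\<And>i. Suc i < length as \<Longrightarrow> as ! i \<noteq> as ! Suc i" using assms(1) unfolding adj_def by blast
  have bc: "b < length as" "as ! b = \<alpha>" "c < length as" "as ! c = \<alpha>" using assms(2,3) unfolding inblk_def by auto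
  show False using cb
  proof
    assume "c = Suc b" then show False using a[of b] bc by simp
  next
    assume "b = Suc c" then show False using a[of c] bc by simp
  qed
qed

lemma inpair_blk:
  assumes "adj as" "inblk as \<alpha> b r"
  shows "in_pair as \<alpha> r t \<longleftrightarrow> (t = b \<or> t = Suc b)"
proof
  assume "in_pair as \<alpha> r t"
  then obtain i where i: "i < length as" "as ! i = \<alpha>" "r \<in> {i, Suc i}" "t \<in> {i, Suc i}"
    unfolding in_pair_def by blast
  then have "inblk as \<alpha> i r" unfolding inblk_def by auto
  then have "i = b" using inblk_unique[OF assms(1) _ assms(2)] by blast
  then show "t = b \<or> t = Suc b" using i by auto
next
  assume "t = b \<or> t = Suc b" then show "in_pair as \<alpha> r t"
    using assms(2) unfolding in_pair_def inblk_def by auto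
qed

lemma inpair_ex: "in_pair as \<alpha> r t \<Longrightarrow> \<exists>b. inblk as \<alpha> b r"
  unfolding in_pair_def inblk_def by auto

lemma noblk_iff: "(\<forall>i<length as. as ! i = \<alpha> \<longrightarrow> r \<notin> {i, Suc i}) \<longleftrightarrow> \<not> (\<exists>b. inblk as \<alpha> b r)"
  unfolding inblk_def by auto

lemma inblk_lt: "inblk as \<alpha> b r \<Longrightarrow> r < Suc (length as)"
  unfolding inblk_def by auto

lemma Pd_carrier: "P_down as \<alpha> \<in> carrier_mat (Suc (length as)) (Suc (length as))"
  unfolding P_down_def by simp

lemma Pu_carrier: "P_up as \<alpha> \<in> carrier_mat (Suc (length as)) (Suc (length as))"
  unfolding P_up_def by simp

lemma Pd_entry:
  assumes "r < Suc (length as)" "s < Suc (length as)"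
  shows "P_down as \<alpha> $$ (r, s) = (if in_pair as \<alpha> r s then (if r = s then 1/2 else -1/2) else 0)"
  using assms unfolding P_down_def by auto

lemma Pd_blk:
  assumes "adj as" "inblk as \<alpha> b r" "s < Suc (length as)"
  shows "P_down as \<alpha> $$ (r, s) = (if s = b \<or> s = Suc b then (if r = s then 1/2 else -1/2) else 0)"
  using Pd_entry[OF inblk_lt[OF assms(2)] assms(3)] inpair_blk[OF assms(1,2)] by simp

lemma Pd_noblk:
  assumes "\<not> (\<exists>b. inblk as \<alpha> b r)" "r < Suc (length as)" "s < Suc (length as)"
  shows "P_down as \<alpha> $$ (r, s) = 0"
  using Pd_entry[OF assms(2,3)] inpair_ex assms(1) by metis

lemma Pu_entry0:
  assumes "r < Suc (length as)" "s < Suc (length as)"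
  shows "P_up as \<alpha> $$ (r, s) = (if r = s \<and> \<not> in_pair as \<alpha> r r then 1
          else if in_pair as \<alpha> r s then 1/2 else 0)"
proof -
  have "(\<forall>i<length as. as ! i = \<alpha> \<longrightarrow> r \<notin> {i, Suc i}) \<longleftrightarrow> \<not> in_pair as \<alpha> r r"
    unfolding in_pair_def by blast
  then show ?thesis using assms unfolding P_up_def by simp
qed

lemma Pu_eq: "P_up as \<alpha> = 1\<^sub>m (Suc (length as)) - P_down as \<alpha>"
proof (rule eq_matI)
  have d: "dim_row (P_down as \<alpha>) = Suc (length as)" "dim_col (P_down as \<alpha>) = Suc (length as)"
    using Pd_carrier[of as \<alpha>] by auto
  fix i j assume ij: "i < dim_row (1\<^sub>m (Suc (length as)) - P_down as \<alpha>)"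
    "j < dim_col (1\<^sub>m (Suc (length as)) - P_down as \<alpha>)"
  then have i: "i < Suc (length as)" and j: "j < Suc (length as)" using d by auto
  have pr: "in_pair as \<alpha> i j \<Longrightarrow> in_pair as \<alpha> i i" unfolding in_pair_def by auto
  have m: "(1\<^sub>m (Suc (length as)) - P_down as \<alpha>) $$ (i, j) = (if i = j then 1 else 0) - P_down as \<alpha> $$ (i, j)"
    using i j d by simp
  show "P_up as \<alpha> $$ (i, j) = (1\<^sub>m (Suc (length as)) - P_down as \<alpha>) $$ (i, j)"
    unfolding m Pu_entry0[OF i j] Pd_entry[OF i j] using pr by auto
next
  show "dim_row (P_up as \<alpha>) = dim_row (1\<^sub>m (Suc (length as)) - P_down as \<alpha>)"
    using Pd_carrier[of as \<alpha>] Pu_carrier[of as \<alpha>] by auto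
  show "dim_col (P_up as \<alpha>) = dim_col (1\<^sub>m (Suc (length as)) - P_down as \<alpha>)"
    using Pd_carrier[of as \<alpha>] Pu_carrier[of as \<alpha>] by auto
qed

lemma Pu_entry:
  assumes "r < Suc (length as)" "s < Suc (length as)"
  shows "P_up as \<alpha> $$ (r, s) = (if r = s then 1 else 0) - P_down as \<alpha> $$ (r, s)"
proof -
  have d: "dim_row (P_down as \<alpha>) = Suc (length as)" "dim_col (P_down as \<alpha>) = Suc (length as)"
    using Pd_carrier[of as \<alpha>] by auto
  show ?thesis unfolding Pu_eq using assms d by simp
qed

lemma Pu_blk:
  assumes "adj as" "inblk as \<alpha> b r" "s < Suc (length as)"
  shows "P_up as \<alpha> $$ (r, s) = (if s = b \<or> s = Suc b then 1/2 else 0)"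
  using assms(2) unfolding Pu_entry[OF inblk_lt[OF assms(2)] assms(3)] Pd_blk[OF assms]
  by (auto simp: inblk_def)

lemma Pu_noblk:
  assumes "\<not> (\<exists>b. inblk as \<alpha> b r)" "r < Suc (length as)" "s < Suc (length as)"
  shows "P_up as \<alpha> $$ (r, s) = (if r = s then 1 else 0)"
  unfolding Pu_entry[OF assms(2,3)] Pd_noblk[OF assms] by simp

lemma inpair_sym: "in_pair as \<alpha> i j \<longleftrightarrow> in_pair as \<alpha> j i"
  unfolding in_pair_def by blast

lemma Pd_herm: "herm (Suc (length as)) (P_down as \<alpha>)"
  unfolding herm_def
proof (intro allI impI)
  fix i j assume ij: "i < Suc (length as)" "j < Suc (length as)"
  show "P_down as \<alpha> $$ (i, j) = cnj (P_down as \<alpha> $$ (j, i))"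
    unfolding Pd_entry[OF ij] Pd_entry[OF ij(2,1)] using inpair_sym[of as \<alpha> i j] by auto
qed

lemma Pd_idem:
  assumes "adj as"
  shows "P_down as \<alpha> * P_down as \<alpha> = P_down as \<alpha>"
proof (rule eq_matI)
  let ?n = "Suc (length as)" let ?D = "P_down as \<alpha>"
  fix r s assume "r < dim_row ?D" "s < dim_col ?D"
  then have r: "r < ?n" and s: "s < ?n" unfolding P_down_def by auto
  have e: "(?D * ?D) $$ (r, s) = (\<Sum>t<?n. ?D $$ (r,t) * ?D $$ (t,s))"
    by (rule mult_entry[OF Pd_carrier Pd_carrier r s])
  show "(?D * ?D) $$ (r, s) = ?D $$ (r, s)"
  proof (cases "\<exists>b. inblk as \<alpha> b r")
    case True
    then obtain b where b: "inblk as \<alpha> b r" by blast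
    have bn: "Suc b < ?n" using b unfolding inblk_def by auto
    have b1: "inblk as \<alpha> b b" "inblk as \<alpha> b (Suc b)" using b unfolding inblk_def by auto
    have "(\<Sum>t<?n. ?D $$ (r,t) * ?D $$ (t,s)) = ?D $$ (r,b) * ?D $$ (b,s) + ?D $$ (r,Suc b) * ?D $$ (Suc b,s)"
      by (rule sum2[OF bn]) (simp add: Pd_blk[OF assms b])
    also have "\<dots> = ?D $$ (r, s)"
    proof -
      have bl: "b < ?n" using bn by simp
      have v: "?D $$ (b,b) = 1/2" "?D $$ (b,Suc b) = -1/2" "?D $$ (Suc b,b) = -1/2"
        "?D $$ (Suc b,Suc b) = 1/2"
        using Pd_blk[OF assms b1(1) bl] Pd_blk[OF assms b1(1) bn]
          Pd_blk[OF assms b1(2) bl] Pd_blk[OF assms b1(2) bn] by auto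
      have rb: "r = b \<or> r = Suc b" using b unfolding inblk_def by auto
      consider "s = b" | "s = Suc b" | "s \<noteq> b \<and> s \<noteq> Suc b" by blast
      then show ?thesis
      proof cases
        case 3
        then have "?D $$ (b,s) = 0" "?D $$ (Suc b,s) = 0" "?D $$ (r,s) = 0"
          using Pd_blk[OF assms b1(1) s] Pd_blk[OF assms b1(2) s] Pd_blk[OF assms b s] by auto
        then show ?thesis by simp
      qed (use rb in \<open>(elim disjE; simp only: v); simp\<close>)+
    qed
    finally show ?thesis using e by simp
  next
    case False
    have "?D $$ (r,t) = 0" if "t < ?n" for t using Pd_noblk[OF False r that] .
    then show ?thesis using e Pd_noblk[OF False r s] by simp
  qed
qed (simp_all add: Pd_carrier[THEN carrier_matD(1)] Pd_carrier[THEN carrier_matD(2)])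


definition diagm :: "nat \<Rightarrow> (nat \<Rightarrow> real) \<Rightarrow> complex mat" where
  "diagm n v = mat n n (\<lambda>(r, s). if r = s then complex_of_real (v r) else 0)"

definition avgv :: "'a list \<Rightarrow> 'a \<Rightarrow> (nat \<Rightarrow> real) \<Rightarrow> nat \<Rightarrow> real" where
  "avgv as \<alpha> v r = (if r < length as \<and> as ! r = \<alpha> then (v r + v (Suc r)) / 2
     else if 0 < r \<and> r \<le> length as \<and> as ! (r - 1) = \<alpha> then (v (r - 1) + v r) / 2 else v r)"

lemma avgv_blk:
  assumes "adj as" "inblk as \<alpha> b r" shows "avgv as \<alpha> v r = (v b + v (Suc b)) / 2"
proof -
  have b: "b < length as" "as ! b = \<alpha>" "r = b \<or> r = Suc b" using assms(2) unfolding inblk_def by auto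
  show ?thesis using b(3)
  proof
    assume "r = b" then show ?thesis using b unfolding avgv_def by simp
  next
    assume r: "r = Suc b"
    have "\<not> (r < length as \<and> as ! r = \<alpha>)"
      using assms(1) b r unfolding adj_def by auto
    then show ?thesis using b r unfolding avgv_def by auto
  qed
qed

lemma avgv_noblk:
  assumes "\<not> (\<exists>b. inblk as \<alpha> b r)" shows "avgv as \<alpha> v r = v r"
proof -
  have "\<not> (r < length as \<and> as ! r = \<alpha>)" using assms unfolding inblk_def by auto
  moreover have "\<not> (0 < r \<and> r \<le> length as \<and> as ! (r - 1) = \<alpha>)"
  proof
    assume h: "0 < r \<and> r \<le> length as \<and> as ! (r - 1) = \<alpha>"
    then have "inblk as \<alpha> (r - 1) r" unfolding inblk_def by auto
    then show False using assms by blast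
  qed
  ultimately show ?thesis unfolding avgv_def by auto
qed

lemma diagm_carrier: "diagm n v \<in> carrier_mat n n"
  unfolding diagm_def by simp

lemma diagm_entry: "i < n \<Longrightarrow> j < n \<Longrightarrow> diagm n v $$ (i, j) = (if i = j then complex_of_real (v i) else 0)"
  unfolding diagm_def by simp

lemma PDP:
  assumes P: "P \<in> carrier_mat n n" and ij: "i < n" "j < n"
  shows "(P * diagm n v * P) $$ (i, j) = (\<Sum>t<n. P $$ (i, t) * complex_of_real (v t) * P $$ (t, j))"
proof -
  have PD: "P * diagm n v \<in> carrier_mat n n" using P diagm_carrier by (rule mult_carrier_mat)
  have pd: "(P * diagm n v) $$ (i, t) = P $$ (i, t) * complex_of_real (v t)" if t: "t < n" for t
  proof -
    have "(P * diagm n v) $$ (i, t) = (\<Sum>u<n. P $$ (i, u) * diagm n v $$ (u, t))"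
      by (rule mult_entry[OF P diagm_carrier ij(1) t])
    also have "\<dots> = P $$ (i, t) * diagm n v $$ (t, t)"
      by (rule sum1[OF t]) (simp add: diagm_entry t)
    finally show ?thesis using t by (simp add: diagm_entry)
  qed
  have "(P * diagm n v * P) $$ (i, j) = (\<Sum>t<n. (P * diagm n v) $$ (i, t) * P $$ (t, j))"
    by (rule mult_entry[OF PD P ij])
  also have "\<dots> = (\<Sum>t<n. P $$ (i, t) * complex_of_real (v t) * P $$ (t, j))"
    by (rule sum.cong) (simp_all add: pd)
  finally show ?thesis .
qed

lemma A_simps:
  "qdim (A_constr as) = Suc (length as)"
  "qinit (A_constr as) = unit_vec (Suc (length as)) 0"
  "qvals (A_constr as) (Some c) = (if c \<in> set as then {True, False} else {True})"
  "qvals (A_constr as) None = {True, False}"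
  "qproj (A_constr as) (Some c) b = (if c \<in> set as then (if b then P_up as c else P_down as c)
                           else 1\<^sub>m (Suc (length as)))"
  "qproj (A_constr as) None b = (if b then P_last (length as)
                         else 1\<^sub>m (Suc (length as)) - P_last (length as))"
  "qacc (A_constr as) = {True}"
  unfolding A_constr_def by simp_all

lemma notin_noblk: "c \<notin> set as \<Longrightarrow> \<not> inblk as c b r"
  unfolding inblk_def by (auto simp: in_set_conv_nth)

lemma mstep_diag:
  assumes adjas: "adj as"
  shows "measure_step (A_constr as) (Some c) (diagm (Suc (length as)) v)
         = diagm (Suc (length as)) (avgv as c v)"
proof (rule eq_matI)
  let ?n = "Suc (length as)"
  let ?\<rho> = "diagm ?n v"
  fix i j assume "i < dim_row (diagm ?n (avgv as c v))" "j < dim_col (diagm ?n (avgv as c v))"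
  then have i: "i < ?n" and j: "j < ?n" unfolding diagm_def by auto
  have L: "measure_step (A_constr as) (Some c) ?\<rho> $$ (i, j)
     = (\<Sum>bo\<in>qvals (A_constr as) (Some c). (qproj (A_constr as) (Some c) bo * ?\<rho> * qproj (A_constr as) (Some c) bo) $$ (i, j))"
    unfolding measure_step_def A_simps(1) using i j by simp
  show "measure_step (A_constr as) (Some c) ?\<rho> $$ (i, j) = diagm ?n (avgv as c v) $$ (i, j)"
  proof (cases "c \<in> set as")
    case False
    have nb: "\<not> (\<exists>b. inblk as c b r)" for r using notin_noblk[OF False] by blast
    have e1: "1\<^sub>m ?n * ?\<rho> = ?\<rho>" by (rule left_mult_one_mat[OF diagm_carrier])
    have e2: "?\<rho> * 1\<^sub>m ?n = ?\<rho>" by (rule right_mult_one_mat[OF diagm_carrier])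
    show ?thesis unfolding L using False i j
      by (simp add: A_simps e1 e2 diagm_entry avgv_noblk[OF nb])
  next
    case True
    define f where "f t = P_up as c $$ (i, t) * complex_of_real (v t) * P_up as c $$ (t, j)
       + P_down as c $$ (i, t) * complex_of_real (v t) * P_down as c $$ (t, j)" for t
    have S: "measure_step (A_constr as) (Some c) ?\<rho> $$ (i, j) = (\<Sum>t<?n. f t)"
      unfolding L using True
      by (simp add: A_simps PDP[OF Pu_carrier i j] PDP[OF Pd_carrier i j] f_def sum.distrib)
    show ?thesis
    proof (cases "\<exists>b. inblk as c b i")
      case False
      have z: "f t = 0" if "t < ?n" "t \<noteq> i" for t
        unfolding f_def using Pu_noblk[OF False i that(1)] Pd_noblk[OF False i that(1)] that by simp
      have sf: "(\<Sum>t<?n. f t) = f i" by (rule sum1[OF i z])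
      have av0: "avgv as c v i = v i" by (rule avgv_noblk[OF False])
      show ?thesis unfolding S sf f_def diagm_entry[OF i j] av0
        using Pu_noblk[OF False i j] Pu_noblk[OF False i i] Pd_noblk[OF False i i] i j
        by simp
    next
      case True
      then obtain b where b: "inblk as c b i" by blast
      have bn: "Suc b < ?n" and bl: "b < ?n" using b unfolding inblk_def by auto
      have b1: "inblk as c b b" "inblk as c b (Suc b)" using b unfolding inblk_def by auto
      have z: "f t = 0" if "t < ?n" "t \<noteq> b" "t \<noteq> Suc b" for t
        unfolding f_def using Pu_blk[OF adjas b that(1)] Pd_blk[OF adjas b that(1)] that by simp
      have "(\<Sum>t<?n. f t) = f b + f (Suc b)" by (rule sum2[OF bn z])
      moreover have av: "avgv as c v i = (v b + v (Suc b)) / 2" by (rule avgv_blk[OF adjas b])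
      moreover have u: "P_up as c $$ (b,b) = 1/2" "P_up as c $$ (b,Suc b) = 1/2"
        "P_up as c $$ (Suc b,b) = 1/2" "P_up as c $$ (Suc b,Suc b) = 1/2"
        using Pu_blk[OF adjas b1(1) bl] Pu_blk[OF adjas b1(1) bn]
          Pu_blk[OF adjas b1(2) bl] Pu_blk[OF adjas b1(2) bn] by auto
      moreover have d: "P_down as c $$ (b,b) = 1/2" "P_down as c $$ (b,Suc b) = -1/2"
        "P_down as c $$ (Suc b,b) = -1/2" "P_down as c $$ (Suc b,Suc b) = 1/2"
        using Pd_blk[OF adjas b1(1) bl] Pd_blk[OF adjas b1(1) bn]
          Pd_blk[OF adjas b1(2) bl] Pd_blk[OF adjas b1(2) bn] by auto
      moreover have rb: "i = b \<or> i = Suc b" using b unfolding inblk_def by auto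
      ultimately show ?thesis unfolding S
      proof -
        assume sf: "(\<Sum>t<?n. f t) = f b + f (Suc b)"
        have tgt: "diagm ?n (avgv as c v) $$ (i, j) = (if i = j then (complex_of_real (v b) + complex_of_real (v (Suc b))) / 2 else 0)"
          unfolding diagm_entry[OF i j] av by simp
        consider "j = b" | "j = Suc b" | "j \<noteq> b \<and> j \<noteq> Suc b" by blast
        then show "(\<Sum>t<?n. f t) = diagm ?n (avgv as c v) $$ (i, j)"
        proof cases
          case 3
          then have "P_up as c $$ (b,j) = 0" "P_up as c $$ (Suc b,j) = 0"
             "P_down as c $$ (b,j) = 0" "P_down as c $$ (Suc b,j) = 0" "i \<noteq> j"
            using Pu_blk[OF adjas b1(1) j] Pu_blk[OF adjas b1(2) j]
              Pd_blk[OF adjas b1(1) j] Pd_blk[OF adjas b1(2) j] rb by auto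
          then show ?thesis unfolding sf unfolding f_def using i j by (simp add: diagm_entry)
        next
          case 1
          show ?thesis unfolding sf tgt unfolding f_def using rb 1
            by (elim disjE) (simp_all add: u d)
        next
          case 2
          show ?thesis unfolding sf tgt unfolding f_def using rb 2
            by (elim disjE) (simp_all add: u d)
        qed
      qed
    qed
  qed
qed (simp_all add: measure_step_def diagm_def A_simps)

definition vinit :: "nat \<Rightarrow> real" where "vinit r = (if r = 0 then 1 else 0)"

definition vrun :: "'a list \<Rightarrow> 'a list \<Rightarrow> nat \<Rightarrow> real" where
  "vrun as x = foldl (\<lambda>v c. avgv as c v) vinit x"

lemma rho0_diag: "rho0 (A_constr as) = diagm (Suc (length as)) vinit"
  unfolding rho0_def diagm_def A_simps vinit_def
  by (rule eq_matI) auto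

lemma rho_after_diag:
  assumes "adj as"
  shows "rho_after (A_constr as) x = diagm (Suc (length as)) (vrun as x)"
proof (induction x rule: rev_induct)
  case Nil
  then show ?case unfolding rho_after_def vrun_def by (simp add: rho0_diag)
next
  case (snoc c x)
  have "rho_after (A_constr as) (x @ [c]) = measure_step (A_constr as) (Some c) (rho_after (A_constr as) x)"
    unfolding rho_after_def by simp
  also have "\<dots> = diagm (Suc (length as)) (avgv as c (vrun as x))"
    unfolding snoc by (rule mstep_diag[OF assms])
  also have "avgv as c (vrun as x) = vrun as (x @ [c])"
    unfolding vrun_def by simp
  finally show ?case .
qed

lemma Plast_carrier: "P_last k \<in> carrier_mat (Suc k) (Suc k)"
  unfolding P_last_def by simp

lemma Plast_entry: "i < Suc k \<Longrightarrow> j < Suc k \<Longrightarrow> P_last k $$ (i, j) = (if i = k \<and> j = k then 1 else 0)"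
  unfolding P_last_def by simp

lemma pacc_diag:
  assumes "adj as"
  shows "p_acc (A_constr as) x = vrun as x (length as)"
proof -
  let ?n = "Suc (length as)" let ?k = "length as"
  let ?M = "P_last ?k * diagm ?n (vrun as x)"
  have dM: "dim_row ?M = ?n" using Plast_carrier[of ?k] by simp
  have ent: "?M $$ (i, i) = (if i = ?k then complex_of_real (vrun as x ?k) else 0)" if i: "i < ?n" for i
  proof -
    have "?M $$ (i, i) = (\<Sum>t<?n. P_last ?k $$ (i, t) * diagm ?n (vrun as x) $$ (t, i))"
      by (rule mult_entry[OF Plast_carrier diagm_carrier i i])
    also have "\<dots> = P_last ?k $$ (i, i) * diagm ?n (vrun as x) $$ (i, i)"
      by (rule sum1[OF i]) (simp add: diagm_entry i)
    finally show ?thesis using i by (simp add: diagm_entry Plast_entry)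
  qed
  have "mtrace ?M = (\<Sum>i<?n. ?M $$ (i, i))" unfolding mtrace_def dM ..
  also have "\<dots> = ?M $$ (?k, ?k)" by (rule sum1) (simp_all add: ent)
  also have "\<dots> = complex_of_real (vrun as x ?k)" by (simp add: ent)
  finally have "mtrace ?M = complex_of_real (vrun as x ?k)" .
  then show ?thesis unfolding p_acc_def A_simps rho_after_diag[OF assms] by simp
qed

definition mstep :: "'a list \<Rightarrow> nat \<Rightarrow> 'a \<Rightarrow> nat" where
  "mstep as m c = (if m < length as \<and> as ! m = c then Suc m else m)"

definition mrun :: "'a list \<Rightarrow> 'a list \<Rightarrow> nat" where
  "mrun as x = foldl (mstep as) 0 x"

lemma pw_mono: "m \<le> m' \<Longrightarrow> (1::real) / 2 ^ m' \<le> 1 / 2 ^ m"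
  by (simp add: frac_le power_increasing)

definition INV :: "'a list \<Rightarrow> nat \<Rightarrow> (nat \<Rightarrow> real) \<Rightarrow> bool" where
  "INV as m v \<longleftrightarrow> m \<le> length as \<and>
     (\<forall>r\<le>length as. (r \<le> m \<longrightarrow> v r \<ge> 1 / 2 ^ m) \<and> (m < r \<longrightarrow> v r = 0))"

lemma inv_step:
  assumes adjas: "adj as" and I: "INV as m v"
  shows "INV as (mstep as m c) (avgv as c v)"
proof -
  let ?k = "length as" let ?m' = "mstep as m c"
  have mk: "m \<le> ?k" using I unfolding INV_def by simp
  have lo: "\<And>r. r \<le> m \<Longrightarrow> v r \<ge> 1 / 2 ^ m" using I mk unfolding INV_def by auto
  have hi: "\<And>r. m < r \<Longrightarrow> r \<le> ?k \<Longrightarrow> v r = 0" using I unfolding INV_def by auto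
  have m'k: "?m' \<le> ?k" using mk unfolding mstep_def by auto
  have mm': "m \<le> ?m'" "?m' \<le> Suc m" unfolding mstep_def by auto
  have pm: "(1::real) / 2 ^ ?m' \<le> 1 / 2 ^ m" by (rule pw_mono[OF mm'(1)])
  have pos: "(0::real) < 1 / 2 ^ m" by simp
  have "(r \<le> ?m' \<longrightarrow> avgv as c v r \<ge> 1 / 2 ^ ?m') \<and> (?m' < r \<longrightarrow> avgv as c v r = 0)"
    if rk: "r \<le> ?k" for r
  proof (cases "\<exists>b. inblk as c b r")
    case True
    then obtain b where b: "inblk as c b r" by blast
    have bb: "b < ?k" "as ! b = c" "r = b \<or> r = Suc b" using b unfolding inblk_def by auto
    have w: "avgv as c v r = (v b + v (Suc b)) / 2" by (rule avgv_blk[OF adjas b])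
    consider "Suc b \<le> m" | "b = m" | "m < b" by linarith
    then show ?thesis
    proof cases
      case 1
      have "v b \<ge> 1 / 2 ^ m" "v (Suc b) \<ge> 1 / 2 ^ m" using lo 1 by auto
      then have "avgv as c v r \<ge> 1 / 2 ^ m" unfolding w by simp
      then show ?thesis using pm bb(3) 1 mm' by auto
    next
      case 2
      have m': "?m' = Suc m" using 2 bb unfolding mstep_def by simp
      have "v b \<ge> 1 / 2 ^ m" using lo 2 by auto
      moreover have "v (Suc b) = 0" using hi 2 bb(1) by auto
      ultimately have "avgv as c v r \<ge> 1 / 2 ^ Suc m" unfolding w 2 by simp
      then show ?thesis using m' bb(3) 2 by auto
    next
      case 3
      have "v b = 0" "v (Suc b) = 0" using hi 3 bb(1) by auto
      then have w0: "avgv as c v r = 0" unfolding w by simp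
      have "?m' < r"
      proof (rule ccontr)
        assume "\<not> ?m' < r"
        then have "r \<le> ?m'" by simp
        then have "r = Suc m" "?m' = Suc m" using mm' 3 bb(3) by auto
        then have "as ! m = c" "m < ?k" "b = Suc m" using 3 bb(3) unfolding mstep_def
          by (auto split: if_splits)
        then show False using adjas bb(1,2) unfolding adj_def by auto
      qed
      then show ?thesis using w0 by simp
    qed
  next
    case False
    have w: "avgv as c v r = v r" by (rule avgv_noblk[OF False])
    show ?thesis
    proof (cases "r \<le> m")
      case True
      then show ?thesis using lo[OF True] pm mm' unfolding w by auto
    next
      case nr: False
      have "?m' < r"
      proof (rule ccontr)
        assume "\<not> ?m' < r"
        then have "r = Suc m" "?m' = Suc m" using mm' nr by auto
        then have "as ! m = c" "m < ?k" "r = Suc m" unfolding mstep_def by (auto split: if_splits)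
        then have "inblk as c m r" unfolding inblk_def by auto
        then show False using False by blast
      qed
      then show ?thesis using hi[of r] nr rk unfolding w by auto
    qed
  qed
  then show ?thesis using m'k unfolding INV_def by blast
qed

lemma inv_run:
  assumes "adj as" shows "INV as (mrun as x) (vrun as x)"
proof (induction x rule: rev_induct)
  case Nil
  then show ?case unfolding INV_def mrun_def vrun_def vinit_def by auto
next
  case (snoc c x)
  then show ?case unfolding mrun_def vrun_def using inv_step[OF assms] by (simp add: mrun_def vrun_def)
qed

definition rstep :: "'a list \<Rightarrow> 'a \<Rightarrow> 'a list" where
  "rstep bs c = (case bs of [] \<Rightarrow> [] | a # r \<Rightarrow> if c = a then r else bs)"

lemma Lsub_prefix: "w \<in> Lsub Sig bs \<Longrightarrow> y \<in> lists Sig \<Longrightarrow> y @ w \<in> Lsub Sig bs"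
proof (cases bs)
  case Nil
  then show "w \<in> Lsub Sig bs \<Longrightarrow> y \<in> lists Sig \<Longrightarrow> y @ w \<in> Lsub Sig bs" by simp
next
  case (Cons a r)
  assume w: "w \<in> Lsub Sig bs" and y: "y \<in> lists Sig"
  then obtain u v where "w = u @ [a] @ v" "u \<in> lists Sig" "v \<in> Lsub Sig r" using Cons by auto
  then have "y @ w = (y @ u) @ [a] @ v" "y @ u \<in> lists Sig" using y by auto
  then have "\<exists>u v. y @ w = u @ [a] @ v \<and> u \<in> lists Sig \<and> v \<in> Lsub Sig r"
    using \<open>v \<in> Lsub Sig r\<close> by blast
  then show ?thesis using Cons by simp
qed

lemma Lsub_nonempty: "w \<in> Lsub Sig (a # r) \<Longrightarrow> w \<noteq> []"
  by auto

lemma Lsub_step: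
  assumes x: "x \<in> lists Sig" and c: "c \<in> Sig"
  shows "c # x \<in> Lsub Sig bs \<longleftrightarrow> x \<in> Lsub Sig (rstep bs c)"
proof (cases bs)
  case Nil
  then show ?thesis using x c by (simp add: rstep_def)
next
  case (Cons a r)
  show ?thesis
  proof (cases "c = a")
    case True
    have rs: "rstep bs c = r" using Cons True by (simp add: rstep_def)
    show ?thesis unfolding rs
    proof
      assume "c # x \<in> Lsub Sig bs"
      then obtain u v where uv: "c # x = u @ [a] @ v" "u \<in> lists Sig" "v \<in> Lsub Sig r" using Cons by auto
      show "x \<in> Lsub Sig r"
      proof (cases u)
        case Nil then show ?thesis using uv by simp
      next
        case (Cons u1 u')
        then have "x = (u' @ [a]) @ v" "u' @ [a] \<in> lists Sig" using uv c True by auto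
        then show ?thesis using Lsub_prefix[OF uv(3), of "u' @ [a]"] by simp
      qed
    next
      assume "x \<in> Lsub Sig r"
      then have "c # x = [] @ [a] @ x" using True by simp
      then have "\<exists>u v. c # x = u @ [a] @ v \<and> u \<in> lists Sig \<and> v \<in> Lsub Sig r"
        using \<open>x \<in> Lsub Sig r\<close> by (blast intro: lists.Nil)
      then show "c # x \<in> Lsub Sig bs" using Cons by simp
    qed
  next
    case False
    have rs: "rstep bs c = bs" using Cons False by (simp add: rstep_def)
    show ?thesis unfolding rs
    proof
      assume "c # x \<in> Lsub Sig bs"
      then obtain u v where uv: "c # x = u @ [a] @ v" "u \<in> lists Sig" "v \<in> Lsub Sig r" using Cons by auto
      then obtain u' where u: "u = c # u'" using False by (cases u) auto
      then have "x = u' @ [a] @ v" "u' \<in> lists Sig" using uv by auto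
      then show "x \<in> Lsub Sig bs" using Cons uv(3) by auto
    next
      assume "x \<in> Lsub Sig bs"
      then show "c # x \<in> Lsub Sig bs" using Lsub_prefix[of x Sig bs "[c]"] c by simp
    qed
  qed
qed

lemma Lsub_run: "x \<in> lists Sig \<Longrightarrow> (x \<in> Lsub Sig bs \<longleftrightarrow> foldl rstep bs x = [])"
proof (induction x arbitrary: bs)
  case Nil
  then show ?case by (cases bs) auto
next
  case (Cons c x)
  then have "x \<in> lists Sig" "c \<in> Sig" by auto
  then show ?case using Lsub_step[of x Sig c bs] Cons.IH by simp
qed

lemma rstep_drop: "foldl rstep (drop m as) x = drop (foldl (mstep as) m x) as"
proof (induction x arbitrary: m)
  case Nil
  then show ?case by simp
next
  case (Cons c x)
  have "rstep (drop m as) c = drop (mstep as m c) as"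
  proof (cases "m < length as")
    case True
    then have "drop m as = as ! m # drop (Suc m) as" by (rule Cons_nth_drop_Suc[symmetric])
    then show ?thesis unfolding rstep_def mstep_def using True by simp
  next
    case False
    then show ?thesis unfolding rstep_def mstep_def by simp
  qed
  then show ?case using Cons.IH by simp
qed

lemma L_iff_mrun:
  assumes "x \<in> lists Sig" "adj as"
  shows "x \<in> Lsub Sig as \<longleftrightarrow> mrun as x = length as"
proof -
  have "x \<in> Lsub Sig as \<longleftrightarrow> foldl rstep (drop 0 as) x = []" using Lsub_run[OF assms(1)] by simp
  also have "\<dots> \<longleftrightarrow> drop (mrun as x) as = []" unfolding rstep_drop mrun_def ..
  also have "\<dots> \<longleftrightarrow> mrun as x = length as"
    using inv_run[OF assms(2), of x] unfolding INV_def by auto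
  finally show ?thesis .
qed

lemma arith_bound:
  fixes k :: nat
  shows "(1::real) / 2 ^ (2 * (k + 1)) \<le> 1 / 2 ^ k - 1 / 2 ^ (2 * k + 1)"
proof -
  define q :: real where "q = 2 ^ k"
  have q1: "q \<ge> 1" unfolding q_def by simp
  have e1: "(2::real) ^ (2 * (k + 1)) = 4 * q * q" unfolding q_def
    by (simp add: power_add power_mult power2_eq_square algebra_simps flip: power_mult_distrib)
  have e2: "(2::real) ^ (2 * k + 1) = 2 * q * q" unfolding q_def
    by (simp add: power_add power_mult power2_eq_square algebra_simps flip: power_mult_distrib)
  have "1 / (4 * q * q) \<le> 1 / q - 1 / (2 * q * q)"
    using q1 by (simp add: field_simps)
  then show ?thesis unfolding e1 e2 q_def[symmetric] .
qed

lemma Plast_idem: "P_last k * P_last k = P_last k"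
proof (rule eq_matI)
  fix i j assume "i < dim_row (P_last k)" "j < dim_col (P_last k)"
  then have i: "i < Suc k" and j: "j < Suc k" unfolding P_last_def by auto
  have "(P_last k * P_last k) $$ (i, j) = (\<Sum>t<Suc k. P_last k $$ (i, t) * P_last k $$ (t, j))"
    by (rule mult_entry[OF Plast_carrier Plast_carrier i j])
  also have "\<dots> = P_last k $$ (i, k) * P_last k $$ (k, j)"
    by (rule sum1) (simp_all add: Plast_entry i)
  finally show "(P_last k * P_last k) $$ (i, j) = P_last k $$ (i, j)" using i j by (simp add: Plast_entry)
qed (simp_all add: P_last_def)

lemma Plast_herm: "herm (Suc k) (P_last k)"
  unfolding herm_def by (simp add: Plast_entry)

lemma obs2:
  assumes D: "D \<in> carrier_mat n n" and DD: "D * D = D" and h: "herm n D"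
    and nz1: "D \<noteq> 0\<^sub>m n n" and nz2: "1\<^sub>m n - D \<noteq> 0\<^sub>m n n"
    and P: "(P True = D \<and> P False = 1\<^sub>m n - D) \<or> (P True = 1\<^sub>m n - D \<and> P False = D)"
  shows "is_observable n {True, False} P"
proof -
  have pD: "is_orth_projector n D" using D DD h unfolding is_orth_projector_def herm_def by blast
  note pc = proj_compl[OF D DD h]
  have sum: "P True $$ (i, j) + P False $$ (i, j) = 1\<^sub>m n $$ (i, j)" if "i < n" "j < n" for i j
  proof -
    have "D $$ (i, j) + (1\<^sub>m n - D) $$ (i, j) = 1\<^sub>m n $$ (i, j)" using D that by simp
    then show ?thesis using P by (auto simp: add.commute)
  qed
  show ?thesis unfolding is_observable_def
    using pD pc P nz1 nz2 sum by auto
qed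

lemma obs1: "n > 0 \<Longrightarrow> is_observable n {True} (\<lambda>b. 1\<^sub>m n)"
proof -
  assume n: "n > 0"
  have "1\<^sub>m n \<noteq> (0\<^sub>m n n :: complex mat)"
  proof
    assume "1\<^sub>m n = (0\<^sub>m n n :: complex mat)"
    then have "(1\<^sub>m n :: complex mat) $$ (0, 0) = 0\<^sub>m n n $$ (0, 0)" by simp
    then show False using n by simp
  qed
  moreover have "is_orth_projector n (1\<^sub>m n)" unfolding is_orth_projector_def by simp
  ultimately show ?thesis unfolding is_observable_def by simp
qed

lemma mat_nz: "A \<in> carrier_mat n n \<Longrightarrow> i < n \<Longrightarrow> A $$ (i, i) \<noteq> 0 \<Longrightarrow> A \<noteq> 0\<^sub>m n n"
  by auto

theorem theorem5:
  fixes Sig :: "'a set" and as :: "'a list"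
  assumes "finite Sig"
    and "length as \<ge> 1"
    and "set as \<subseteq> Sig"
    and "\<forall>i. Suc i < length as \<longrightarrow> as ! i \<noteq> as ! Suc i"
  shows "is_mon1qfa Sig (A_constr as) \<and>
         recognizes_isolated Sig (A_constr as) (Lsub Sig as)
           (1 / 2 ^ (2 * length as + 1)) (1 / 2 ^ (2 * (length as + 1)))"
proof -
  have adjas: "adj as" using assms(4) unfolding adj_def .
  let ?k = "length as" let ?n = "Suc (length as)"
  have obsN: "is_observable ?n (qvals (A_constr as) None) (qproj (A_constr as) None)"
  proof -
    have k0: "0 \<noteq> ?k" using assms(2) by linarith
    have "(1\<^sub>m ?n - P_last ?k) $$ (0, 0) = 1" using k0 Plast_carrier[of ?k]
      by (simp add: Plast_entry)
    then have nz2: "1\<^sub>m ?n - P_last ?k \<noteq> 0\<^sub>m ?n ?n"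
      by (intro mat_nz[of _ ?n 0]) (auto intro: minus_carrier_mat Plast_carrier)
    have nz1: "P_last ?k \<noteq> 0\<^sub>m ?n ?n"
      by (rule mat_nz[OF Plast_carrier, of ?k]) (simp_all add: Plast_entry)
    show ?thesis unfolding A_simps
      by (rule obs2[OF Plast_carrier Plast_idem Plast_herm nz1 nz2]) simp
  qed
  have obsS: "is_observable ?n (qvals (A_constr as) (Some c)) (qproj (A_constr as) (Some c))" for c
  proof (cases "c \<in> set as")
    case False
    then show ?thesis unfolding A_simps using obs1[of ?n] by simp
  next
    case True
    then obtain b where b: "b < ?k" "as ! b = c" by (auto simp: in_set_conv_nth)
    have bi: "inblk as c b b" using b unfolding inblk_def by simp
    have bn: "b < ?n" using b by simp
    have pd: "P_down as c $$ (b, b) = 1/2" using Pd_blk[OF adjas bi bn] by simp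
    have pu: "P_up as c $$ (b, b) = 1/2" using Pu_blk[OF adjas bi bn] by simp
    have nz1: "P_down as c \<noteq> 0\<^sub>m ?n ?n" by (rule mat_nz[OF Pd_carrier bn]) (simp add: pd)
    have nz2: "1\<^sub>m ?n - P_down as c \<noteq> 0\<^sub>m ?n ?n"
      unfolding Pu_eq[symmetric] by (rule mat_nz[OF Pu_carrier bn]) (simp add: pu)
    have e1: "qproj (A_constr as) (Some c) = (\<lambda>b. if b then 1\<^sub>m ?n - P_down as c else P_down as c)"
      by (rule ext) (simp add: A_simps Pu_eq True)
    have e2: "qvals (A_constr as) (Some c) = {True, False}" by (simp add: A_simps True)
    show ?thesis unfolding e1 e2
      by (rule obs2[OF Pd_carrier Pd_idem[OF adjas] Pd_herm nz1 nz2]) simp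
  qed
  have m1: "is_mon1qfa Sig (A_constr as)"
    unfolding is_mon1qfa_def
  proof (intro conjI ballI)
    show "qinit (A_constr as) \<in> carrier_vec (qdim (A_constr as))" unfolding A_simps by simp
    have "(\<Sum>i<?n. (cmod (unit_vec ?n 0 $ i))\<^sup>2) = (cmod (unit_vec ?n 0 $ 0))\<^sup>2"
      by (rule sum1) simp_all
    then show "(\<Sum>i<qdim (A_constr as). (cmod (qinit (A_constr as) $ i))\<^sup>2) = 1"
      unfolding A_simps by simp
    fix c assume "c \<in> insert None (Some ` Sig)"
    then show "is_observable (qdim (A_constr as)) (qvals (A_constr as) c) (qproj (A_constr as) c)"
      unfolding A_simps(1) using obsN obsS by auto
  next
    show "qacc (A_constr as) \<subseteq> qvals (A_constr as) None" unfolding A_simps by simp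
  qed
  have ri: "recognizes_isolated Sig (A_constr as) (Lsub Sig as)
           (1 / 2 ^ (2 * length as + 1)) (1 / 2 ^ (2 * (length as + 1)))"
    unfolding recognizes_isolated_def
  proof (rule conjI[OF _ ballI])
    show "(0::real) < 1 / 2 ^ (2 * (length as + 1))" by simp
    fix x assume x: "x \<in> lists Sig"
    let ?lam = "(1::real) / 2 ^ (2 * length as + 1)" let ?d = "(1::real) / 2 ^ (2 * (length as + 1))"
    have p: "p_acc (A_constr as) x = vrun as x ?k" by (rule pacc_diag[OF adjas])
    have I: "INV as (mrun as x) (vrun as x)" by (rule inv_run[OF adjas])
    have L: "x \<in> Lsub Sig as \<longleftrightarrow> mrun as x = ?k" by (rule L_iff_mrun[OF x adjas])
    have ab: "?d \<le> 1 / 2 ^ ?k - ?lam" by (rule arith_bound)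
    have dpos: "0 < ?d" by simp
    have ld: "?d \<le> ?lam" by (rule pw_mono) simp
    have lpos: "0 < ?lam" by simp
    show "(x \<in> Lsub Sig as) = (?lam < p_acc (A_constr as) x) \<and> ?d \<le> \<bar>p_acc (A_constr as) x - ?lam\<bar>"
    proof (cases "mrun as x = ?k")
      case True
      have v: "vrun as x ?k \<ge> 1 / 2 ^ ?k" using I True unfolding INV_def by auto
      have g: "vrun as x ?k - ?lam \<ge> ?d" using v ab by linarith
      have g2: "?lam < vrun as x ?k" using g dpos by linarith
      have g3: "\<bar>vrun as x ?k - ?lam\<bar> = vrun as x ?k - ?lam" using g2 by simp
      show ?thesis unfolding p g3 using L True g g2 by blast
    next
      case False
      then have "mrun as x < ?k" using I unfolding INV_def by auto
      then have "vrun as x ?k = 0" using I unfolding INV_def by auto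
      then show ?thesis unfolding p using L False ld lpos by simp
    qed
  qed
  show ?thesis using m1 ri by blast
qed
end
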